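(* Let $\Omega$ be an alphabet with $b\geq 2$ symbols and let $x\in\Omega^{\mathbb{N}}$. Fix a positive real number $\lambda$ and define, for every $i\in\mathbb{N}_0$, $p_i=\liminf_{k\to\infty}Z^\lambda_{i,k}(x)$. If $\sum_{i\geq 0} i\,p_i=\lambda$, then $x$ is Borel normal to base $b$.
   Context: Positions in sequences are numbered from $1$; $x[i\dots j]$ is the subword from position $i$ to $j$. For words $v,w$, $|v|_w=\#\{1\leq i\leq |v|-|w|+1 : v[i\dots i+|w|-1]=w\}$. For $x\in\Omega^{\mathbb{N}}$, $\lambda>0$, $i\in\mathbb{N}_0$, $k\in\mathbb{N}$, $Z^\lambda_{i,k}(x)=b^{-k}\,\#\{w\in\Omega^k : |x[1\dots\lfloor\lambda b^k\rfloor+k-1]|_w=i\}$. A sequence $x\in\Omega^{\mathbb{N}}$ is Borel normal (to base $b$) if for every finite word $w$ over $\Omega$, $\lim_{n\to\infty}|x[1\dots n]|_w/n=b^{-|w|}$. *)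

theory Defs
  imports "HOL-Analysis.Analysis"
begin

text \<open>Sequences x over the alphabet 'a are functions nat => 'a; the paper's position j
  (numbered from 1) corresponds to x (j - 1). The prefix x[1..n] is the list of the first n symbols.\<close>
definition pref :: "(nat \<Rightarrow> 'a) \<Rightarrow> nat \<Rightarrow> 'a list" where
  "pref x n = map x [0..<n]"

definition occ :: "'a list \<Rightarrow> 'a list \<Rightarrow> nat" where
  "occ v w = card {i. i + length w \<le> length v \<and> take (length w) (drop i v) = w}"

definition Zfreq :: "real \<Rightarrow> nat \<Rightarrow> nat \<Rightarrow> (nat \<Rightarrow> 'a::finite) \<Rightarrow> real" where
  "Zfreq lam i k x =
     real (card {w :: 'a list. length w = k \<and>
        occ (pref x (nat \<lfloor>lam * real CARD('a) ^ k\<rfloor> + k - 1)) w = i})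
     / real CARD('a) ^ k"

definition borel_normal :: "(nat \<Rightarrow> 'a::finite) \<Rightarrow> bool" where
  "borel_normal x \<longleftrightarrow> (\<forall>w :: 'a list.
     (\<lambda>n. real (occ (pref x n) w) / real n) \<longlonglongrightarrow> (1 / real CARD('a)) ^ length w)"

end

theory Submission
  imports Defs "HOL-Real_Asymp.Real_Asymp"
begin


lemma finite_words[simp]: "finite {w::'a::finite list. length w = k}"
  using finite_lists_length_eq[of "UNIV::'a set" k] by simp

lemma card_words: "card {w::'a::finite list. length w = k} = CARD('a)^k"
  using card_lists_length_eq[of "UNIV::'a set" k] by simp

lemma card_fix:
  fixes g :: "nat \<Rightarrow> 'a::finite"
  assumes "D \<subseteq> {..<k}"
  shows "card {w::'a list. length w = k \<and> (\<forall>d\<in>D. w!d = g d)} = CARD('a)^(k - card D)"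
  using assms
proof (induction k arbitrary: D g)
  case 0
  then have "D = {}" by auto
  then show ?case by simp
next
  case (Suc k)
  define D' where "D' = {d. Suc d \<in> D}"
  have D': "D' \<subseteq> {..<k}" using Suc.prems by (auto simp: D'_def)
  have IH: "card {w::'a list. length w = k \<and> (\<forall>d\<in>D'. w!d = g (Suc d))} = CARD('a)^(k - card D')"
    using Suc.IH[OF D'] .
  define A where "A = {a. 0\<in>D \<longrightarrow> a = g 0}"
  define B where "B = {w::'a list. length w = k \<and> (\<forall>d\<in>D'. w!d = g (Suc d))}"
  have eq: "{w. length w = Suc k \<and> (\<forall>d\<in>D. w!d = g d)} = (\<lambda>(a,w). a#w) ` (A \<times> B)"
  proof (rule set_eqI, rule iffI)
    fix w assume w: "w \<in> {w. length w = Suc k \<and> (\<forall>d\<in>D. w!d = g d)}"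
    then obtain a v where wv: "w = a#v" by (cases w) auto
    have "a \<in> A" using w wv by (auto simp: A_def)
    moreover have "v \<in> B" using w wv by (auto simp: B_def D'_def)
    ultimately show "w \<in> (\<lambda>(a,w). a#w) ` (A \<times> B)" using wv by auto
  next
    fix w assume "w \<in> (\<lambda>(a,w). a#w) ` (A \<times> B)"
    then obtain a v where wv: "w = a#v" "a \<in> A" "v \<in> B" by auto
    show "w \<in> {w. length w = Suc k \<and> (\<forall>d\<in>D. w!d = g d)}"
    proof (simp add: wv, intro conjI ballI)
      show "length v = k" using wv by (simp add: B_def)
      fix d assume d: "d \<in> D"
      show "(a # v) ! d = g d"
      proof (cases d)
        case 0 then show ?thesis using wv d by (simp add: A_def)
      next
        case (Suc e) then show ?thesis using wv d by (simp add: B_def D'_def)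
      qed
    qed
  qed
  have inj: "inj_on (\<lambda>(a,w). a#w) (A \<times> B)" by (auto simp: inj_on_def)
  have finD': "finite D'" using D' finite_subset by blast
  have cardD: "card D = card D' + (if 0 \<in> D then 1 else 0)"
  proof -
    have "D = Suc ` D' \<union> (D \<inter> {0})" by (auto simp: D'_def) (metis not0_implies_Suc imageI mem_Collect_eq)
    moreover have "card (Suc ` D' \<union> (D \<inter> {0})) = card (Suc ` D') + card (D \<inter> {0})"
      by (rule card_Un_disjoint) (use finD' in auto)
    moreover have "card (Suc ` D') = card D'" by (simp add: card_image)
    ultimately show ?thesis by auto
  qed
  have cD': "card D' \<le> k" using card_mono[OF _ D'] by simp
  have cardA: "card A = (if 0 \<in> D then 1 else CARD('a))" by (auto simp: A_def)
  have "card {w. length w = Suc k \<and> (\<forall>d\<in>D. w!d = g d)} = card A * card B"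
    unfolding eq card_image[OF inj] card_cartesian_product ..
  also have "\<dots> = CARD('a)^(Suc k - card D)"
    using IH cD' unfolding B_def[symmetric] cardA cardD
    by (auto simp: Suc_diff_le)
  finally show ?case .
qed



lemma take_drop_eq_iff:
  assumes "length w = k" "i + l \<le> k" "length u = l"
  shows "take l (drop i w) = u \<longleftrightarrow> (\<forall>d\<in>{i..<i+l}. w!d = u!(d-i))"
proof
  assume h: "take l (drop i w) = u"
  show "\<forall>d\<in>{i..<i+l}. w!d = u!(d-i)"
  proof
    fix d assume d: "d \<in> {i..<i+l}"
    have "u!(d-i) = take l (drop i w) ! (d-i)" using h by simp
    also have "\<dots> = w!d" using d assms by auto
    finally show "w!d = u!(d-i)" by simp
  qed
next
  assume h: "\<forall>d\<in>{i..<i+l}. w!d = u!(d-i)"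
  show "take l (drop i w) = u"
  proof (rule nth_equalityI)
    show "length (take l (drop i w)) = length u" using assms by simp
    fix m assume m: "m < length (take l (drop i w))"
    then have "m < l" using assms by simp
    then have "w!(i+m) = u!m" using h by (metis add_diff_cancel_left' atLeastLessThan_iff le_add1 add_less_cancel_left)
    then show "take l (drop i w) ! m = u ! m" using m assms by simp
  qed
qed

lemma card_single:
  assumes "i + l \<le> k" "length u = l"
  shows "card {w::'a::finite list. length w = k \<and> take l (drop i w) = u} = CARD('a)^(k-l)"
proof -
  have "{w::'a list. length w = k \<and> take l (drop i w) = u} =
        {w. length w = k \<and> (\<forall>d\<in>{i..<i+l}. w!d = (\<lambda>d. u!(d-i)) d)}"
    using take_drop_eq_iff[OF _ assms(1,2)] by auto
  also have "card \<dots> = CARD('a)^(k - card {i..<i+l})"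
    by (rule card_fix) (use assms in auto)
  finally show ?thesis by simp
qed

lemma card_pair:
  assumes "i + l \<le> j" "j + l \<le> k" "length u = l"
  shows "card {w::'a::finite list. length w = k \<and> take l (drop i w) = u \<and> take l (drop j w) = u}
     = CARD('a)^(k-2*l)"
proof -
  define g where "g d = (if d < j then u!(d-i) else u!(d-j))" for d
  have "{w::'a list. length w = k \<and> take l (drop i w) = u \<and> take l (drop j w) = u} =
        {w. length w = k \<and> (\<forall>d\<in>{i..<i+l} \<union> {j..<j+l}. w!d = g d)}"
    using take_drop_eq_iff[of _ k i l u] take_drop_eq_iff[of _ k j l u] assms
    by (auto simp: g_def)
  also have "card \<dots> = CARD('a)^(k - card ({i..<i+l} \<union> {j..<j+l}))"
    by (rule card_fix) (use assms in auto)
  also have "card ({i..<i+l} \<union> {j..<j+l}) = 2*l"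
    by (subst card_Un_disjoint) (use assms in auto)
  finally show ?thesis .
qed



lemma occ_sum:
  assumes "length w = k" "length u = l"
  shows "real (occ w u) = (\<Sum>t<k+1-l. of_bool (take l (drop t w) = u))"
proof -
  have "{i. i + length u \<le> length w \<and> take (length u) (drop i w) = u} = {..<k+1-l} \<inter> {t. take l (drop t w) = u}"
    using assms by auto
  then show ?thesis unfolding occ_def by simp
qed

lemma pow_split:
  assumes "l \<le> k" "CARD('a::finite) \<ge> 1"
  shows "real CARD('a)^(k-l) = real CARD('a)^k * (1/real CARD('a))^l"
  using assms by (simp add: power_diff power_one_over)

lemma sum_occ:
  fixes u :: "'a::finite list"
  assumes "l \<le> k" "length u = l"
  shows "(\<Sum>w\<in>{w::'a list. length w = k}. real (occ w u)) = real (k+1-l) * real CARD('a)^(k-l)"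
proof -
  have "(\<Sum>w\<in>{w::'a list. length w = k}. real (occ w u)) =
        (\<Sum>w\<in>{w::'a list. length w = k}. \<Sum>t<k+1-l. of_bool (take l (drop t w) = u))"
    using occ_sum assms by (intro sum.cong) auto
  also have "\<dots> = (\<Sum>t<k+1-l. \<Sum>w\<in>{w::'a list. length w = k}. of_bool (take l (drop t w) = u))"
    by (rule sum.swap)
  also have "\<dots> = (\<Sum>t<k+1-l. real CARD('a)^(k-l))"
  proof (rule sum.cong)
    fix t assume t: "t \<in> {..<k+1-l}"
    have "(\<Sum>w\<in>{w::'a list. length w = k}. of_bool (take l (drop t w) = u) :: real)
       = real (card ({w::'a list. length w = k} \<inter> {w. take l (drop t w) = u}))"
      by (rule sum_of_bool_eq) simp_all
    also have "{w::'a list. length w = k} \<inter> {w. take l (drop t w) = u} = {w. length w = k \<and> take l (drop t w) = u}"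
      by auto
    also have "card \<dots> = CARD('a)^(k-l)" using card_single[of t l k u] t assms by auto
    finally show "(\<Sum>w\<in>{w::'a list. length w = k}. of_bool (take l (drop t w) = u) :: real) = real CARD('a)^(k-l)"
      by simp
  qed simp
  finally show ?thesis by simp
qed

lemma card_near: "card ({..<M} \<inter> {s. t < s + l \<and> s < t + l}) \<le> 2 * l"
proof -
  have "{..<M} \<inter> {s. t < s + l \<and> s < t + l} \<subseteq> {t+1-l..<t+l}" by auto
  then have "card ({..<M} \<inter> {s. t < s + l \<and> s < t + l}) \<le> card {t+1-l..<t+l}"
    by (intro card_mono) auto
  also have "\<dots> \<le> 2*l" by simp
  finally show ?thesis .
qed

lemma sum_occ2:
  fixes u :: "'a::finite list"
  assumes "l \<le> k" "length u = l"
  defines "b \<equiv> real CARD('a)" and "c \<equiv> (1 / real CARD('a))^l" and "M \<equiv> k+1-l"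
  shows "(\<Sum>w\<in>{w::'a list. length w = k}. real (occ w u)^2) \<le> real M^2 * b^k * c^2 + 2 * real l * real M * b^k * c"
proof -
  have b1: "CARD('a) \<ge> 1" by (simp add: Suc_leI)
  have cnn: "c \<ge> 0" "b \<ge> 0" by (auto simp: c_def b_def)
  let ?W = "{w::'a list. length w = k}"
  let ?P = "\<lambda>t w. take l (drop t w) = u"
  have "(\<Sum>w\<in>?W. real (occ w u)^2) = (\<Sum>w\<in>?W. \<Sum>t<M. \<Sum>s<M. of_bool (?P t w \<and> ?P s w))"
  proof (rule sum.cong)
    fix w assume "w \<in> ?W"
    then have "real (occ w u) = (\<Sum>t<M. of_bool (?P t w))" using occ_sum assms by (simp add: M_def)
    then have "real (occ w u)^2 = (\<Sum>t<M. of_bool (?P t w))^2" by simp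
    also have "\<dots> = (\<Sum>t<M. \<Sum>s<M. of_bool (?P t w) * of_bool (?P s w))"
      by (simp only: power2_eq_square sum_product)
    finally show "real (occ w u)^2 = (\<Sum>t<M. \<Sum>s<M. of_bool (?P t w \<and> ?P s w))"
      by (simp only: of_bool_conj)
  qed simp
  also have "\<dots> = (\<Sum>t<M. \<Sum>s<M. \<Sum>w\<in>?W. of_bool (?P t w \<and> ?P s w))"
    by (subst sum.swap, rule sum.cong, simp, rule sum.swap)
  also have "\<dots> \<le> (\<Sum>t<M. \<Sum>s<M. b^k * c^2 + of_bool (t < s + l \<and> s < t + l) * (b^k * c))"
  proof (intro sum_mono)
    fix t s assume t: "t \<in> {..<M}" and s: "s \<in> {..<M}"
    have eqW: "(\<Sum>w\<in>?W. of_bool (?P t w \<and> ?P s w) :: real) = real (card {w::'a list. length w = k \<and> ?P t w \<and> ?P s w})"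
    proof -
      have "(\<Sum>w\<in>?W. of_bool (?P t w \<and> ?P s w) :: real) = real (card (?W \<inter> {w. ?P t w \<and> ?P s w}))"
        by (rule sum_of_bool_eq) simp_all
      also have "?W \<inter> {w. ?P t w \<and> ?P s w} = {w::'a list. length w = k \<and> ?P t w \<and> ?P s w}" by blast
      finally show ?thesis .
    qed
    show "(\<Sum>w\<in>?W. of_bool (?P t w \<and> ?P s w)) \<le> b^k * c^2 + of_bool (t < s + l \<and> s < t + l) * (b^k * c)"
    proof (cases "t < s + l \<and> s < t + l")
      case True
      have "card {w::'a list. length w = k \<and> ?P t w \<and> ?P s w} \<le> card {w::'a list. length w = k \<and> ?P t w}"
        by (rule card_mono) (use finite_words in auto)
      also have "\<dots> = CARD('a)^(k-l)" using card_single[of t l k u] t assms by (auto simp: M_def)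
      finally have "real (card {w::'a list. length w = k \<and> ?P t w \<and> ?P s w}) \<le> real (CARD('a)^(k-l))"
        by (simp only: of_nat_le_iff)
      also have "\<dots> = b^k * c" using pow_split[OF assms(1) b1] by (simp add: b_def c_def)
      finally have "real (card {w::'a list. length w = k \<and> ?P t w \<and> ?P s w}) \<le> b^k * c" .
      moreover have "0 \<le> b^k * c^2" using cnn by simp
      ultimately show ?thesis using eqW True by simp
    next
      case False
      then have far: "t + l \<le> s \<or> s + l \<le> t" by auto
      have k2: "2*l \<le> k" using far t s assms by (auto simp: M_def)
      have "card {w::'a list. length w = k \<and> ?P t w \<and> ?P s w} = CARD('a)^(k-2*l)"
        using far
      proof
        assume "t + l \<le> s" then show ?thesis using card_pair[of t l s k u] s assms by (auto simp: M_def)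
      next
        assume "s + l \<le> t" then show ?thesis using card_pair[of s l t k u] t assms
          by (auto simp: M_def conj_commute)
      qed
      moreover have "real CARD('a)^(k-2*l) = b^k * c^2"
        using pow_split[OF k2 b1] by (simp add: b_def c_def power_mult[symmetric] mult.commute)
      ultimately show ?thesis using eqW False by auto
    qed
  qed
  also have "\<dots> = real M^2 * b^k * c^2 + b^k * c * (\<Sum>t<M. real (card ({..<M} \<inter> {s. t < s + l \<and> s < t + l})))"
  proof -
    have inner: "(\<Sum>s<M. b^k * c^2 + of_bool (t < s + l \<and> s < t + l) * (b^k * c))
       = real M * (b^k * c^2) + b^k * c * real (card ({..<M} \<inter> {s. t < s + l \<and> s < t + l}))" for t
    proof -
      have "(\<Sum>s<M. b^k * c^2 + of_bool (t < s + l \<and> s < t + l) * (b^k * c))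
         = (\<Sum>s<M. b^k * c^2) + (\<Sum>s<M. of_bool (t < s + l \<and> s < t + l)) * (b^k * c)"
        by (simp only: sum.distrib sum_distrib_right)
      also have "(\<Sum>s<M. of_bool (t < s + l \<and> s < t + l)) = (real (card ({..<M} \<inter> {s. t < s + l \<and> s < t + l})) :: real)"
        by (rule sum_of_bool_eq) simp_all
      finally show ?thesis by (simp add: algebra_simps)
    qed
    have "(\<Sum>t<M. \<Sum>s<M. b^k * c^2 + of_bool (t < s + l \<and> s < t + l) * (b^k * c))
       = (\<Sum>t<M. real M * (b^k * c^2) + b^k * c * real (card ({..<M} \<inter> {s. t < s + l \<and> s < t + l})))"
      using inner by simp
    also have "\<dots> = real M * (real M * (b^k * c^2)) + b^k * c * (\<Sum>t<M. real (card ({..<M} \<inter> {s. t < s + l \<and> s < t + l})))"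
      by (simp only: sum.distrib sum_distrib_left[symmetric] sum_constant card_lessThan) (simp add: algebra_simps)
    finally show ?thesis by (simp add: power2_eq_square algebra_simps)
  qed
  also have "\<dots> \<le> real M^2 * b^k * c^2 + b^k * c * (\<Sum>t<M. 2 * real l)"
    using card_near cnn by (intro add_left_mono mult_left_mono sum_mono) (auto, metis of_nat_le_iff of_nat_mult of_nat_numeral)
  also have "\<dots> = real M^2 * b^k * c^2 + 2 * real l * real M * b^k * c" by simp
  finally show ?thesis .
qed



lemma var_bound:
  fixes u :: "'a::finite list"
  assumes "l \<le> k" "length u = l"
  defines "b \<equiv> real CARD('a)" and "c \<equiv> (1 / real CARD('a))^l" and "M \<equiv> k+1-l"
  shows "(\<Sum>w\<in>{w::'a list. length w = k}. (real (occ w u) - real M * c)^2) \<le> 2 * real l * real M * b^k"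
proof -
  let ?W = "{w::'a list. length w = k}"
  have b1: "CARD('a) \<ge> 1" by (simp add: Suc_leI)
  have c1: "c \<le> 1" "c \<ge> 0" unfolding c_def using b1 by (auto simp: power_le_one)
  have s1: "(\<Sum>w\<in>?W. real (occ w u)) = real M * b^k * c"
    using sum_occ[OF assms(1,2)] pow_split[OF assms(1) b1] by (simp add: M_def b_def c_def)
  have s2: "(\<Sum>w\<in>?W. real (occ w u)^2) \<le> real M^2 * b^k * c^2 + 2 * real l * real M * b^k * c"
    using sum_occ2[OF assms(1,2)] by (simp add: M_def b_def c_def)
  have cw: "real (card ?W) = b^k" by (simp add: card_words b_def)
  have "(\<Sum>w\<in>?W. (real (occ w u) - real M * c)^2) =
        (\<Sum>w\<in>?W. real (occ w u)^2) - 2 * (real M * c) * (\<Sum>w\<in>?W. real (occ w u)) + real (card ?W) * (real M * c)^2"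
    by (simp add: power2_diff sum.distrib sum_subtractf sum_distrib_left sum_distrib_right mult_ac)
  also have "\<dots> \<le> 2 * real l * real M * b^k * c"
    using s1 s2 cw by (simp add: power2_eq_square algebra_simps)
  also have "\<dots> \<le> 2 * real l * real M * b^k"
  proof -
    have "0 \<le> 2 * real l * real M * b^k" by (simp add: b_def)
    then show ?thesis using c1 by (simp add: mult_left_le)
  qed
  finally show ?thesis .
qed

lemma cheb:
  fixes u :: "'a::finite list"
  assumes "l \<le> k" "length u = l" "\<eta> > 0"
  defines "b \<equiv> real CARD('a)" and "c \<equiv> (1 / real CARD('a))^l" and "M \<equiv> k+1-l"
  shows "real (card {w::'a list. length w = k \<and> (c + \<eta>) * real M \<le> real (occ w u)}) * (\<eta> * real M)^2
          \<le> 2 * real l * real M * b^k"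
proof -
  let ?W = "{w::'a list. length w = k}"
  let ?S = "{w::'a list. length w = k \<and> (c + \<eta>) * real M \<le> real (occ w u)}"
  have "real (card ?S) * (\<eta> * real M)^2 = (\<Sum>w\<in>?S. (\<eta> * real M)^2)" by simp
  also have "\<dots> \<le> (\<Sum>w\<in>?S. (real (occ w u) - real M * c)^2)"
  proof (rule sum_mono)
    fix w assume "w \<in> ?S"
    then have "\<eta> * real M \<le> real (occ w u) - real M * c" by (simp add: algebra_simps)
    moreover have "0 \<le> \<eta> * real M" using assms by simp
    ultimately show "(\<eta> * real M)^2 \<le> (real (occ w u) - real M * c)^2" by (rule power_mono)
  qed
  also have "\<dots> \<le> (\<Sum>w\<in>?W. (real (occ w u) - real M * c)^2)"
    by (rule sum_mono2) auto
  also have "\<dots> \<le> 2 * real l * real M * b^k"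
    using var_bound[OF assms(1,2)] by (simp add: b_def c_def M_def)
  finally show ?thesis .
qed



definition win :: "(nat \<Rightarrow> 'a) \<Rightarrow> nat \<Rightarrow> nat \<Rightarrow> 'a list" where
  "win x j k = map x [j..<j+k]"

lemma length_win[simp]: "length (win x j k) = k"
  by (simp add: win_def)

lemma take_drop_win: "t + l \<le> k \<Longrightarrow> take l (drop t (win x j k)) = win x (j+t) l"
  by (simp add: win_def drop_map take_map add.assoc)

lemma take_drop_pref: "j + k \<le> N \<Longrightarrow> take k (drop j (pref x N)) = win x j k"
  by (simp add: win_def pref_def drop_map take_map)

lemma occ_pref: "occ (pref x N) w = card {j. j + length w \<le> N \<and> win x j (length w) = w}"
proof -
  have "{i. i + length w \<le> length (pref x N) \<and> take (length w) (drop i (pref x N)) = w} =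
        {j. j + length w \<le> N \<and> win x j (length w) = w}"
    using take_drop_pref[of _ "length w" N x] by (auto simp: pref_def)
  then show ?thesis by (simp add: occ_def)
qed

lemma occ_pref_L:
  assumes "length w = k" "k \<ge> 1"
  shows "occ (pref x (L + k - 1)) w = card {j. j < L \<and> win x j k = w}"
proof -
  have "{j. j + k \<le> L + k - 1 \<and> win x j k = w} = {j. j < L \<and> win x j k = w}" using assms by auto
  then show ?thesis using occ_pref[of x "L+k-1" w] assms by simp
qed

lemma sum_fib:
  assumes "finite J" "finite W" "f ` J \<subseteq> W"
  shows "(\<Sum>w\<in>W. card {j\<in>J. f j = w}) = card J"
proof -
  have "J = (\<Union>w\<in>W. {j\<in>J. f j = w})" using assms(3) by auto
  then have "card J = card (\<Union>w\<in>W. {j\<in>J. f j = w})" by simp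
  also have "\<dots> = (\<Sum>w\<in>W. card {j\<in>J. f j = w})"
    by (rule card_UN_disjoint) (use assms in auto)
  finally show ?thesis by simp
qed

lemma shift_sum:
  fixes f :: "nat \<Rightarrow> real"
  assumes "\<And>j. 0 \<le> f j" "\<And>j. f j \<le> 1"
  shows "(\<Sum>j<n. f j) - real t \<le> (\<Sum>j<n. f (j + t))"
proof (induction t)
  case 0 then show ?case by simp
next
  case (Suc t)
  have "(\<Sum>j<Suc n. f (j + t)) = f t + (\<Sum>j<n. f (Suc j + t))"
    using sum.lessThan_Suc_shift[of "\<lambda>j. f (j + t)" n] by simp
  moreover have "(\<Sum>j<n. f (j + t)) \<le> (\<Sum>j<Suc n. f (j + t))" using assms(1) by simp
  ultimately show ?case using Suc assms(2)[of t] by simp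
qed



lemma occ_win:
  assumes "length u = l" "l \<le> k"
  shows "real (occ (win x j k) u) = (\<Sum>t<k+1-l. of_bool (win x (j+t) l = u))"
proof -
  have "real (occ (win x j k) u) = (\<Sum>t<k+1-l. of_bool (take l (drop t (win x j k)) = u))"
    using occ_sum[of "win x j k" k u l] assms by simp
  also have "\<dots> = (\<Sum>t<k+1-l. of_bool (win x (j+t) l = u))"
  proof (rule sum.cong)
    fix t assume "t \<in> {..<k+1-l}"
    then have "t + l \<le> k" using assms by auto
    then show "of_bool (take l (drop t (win x j k)) = u) = (of_bool (win x (j+t) l = u) :: real)"
      by (simp add: take_drop_win)
  qed simp
  finally show ?thesis .
qed

lemma double_count:
  fixes x :: "nat \<Rightarrow> 'a::finite" and u :: "'a list"
  assumes "length u = l" "1 \<le> l" "l \<le> k" "\<tau> \<ge> 0"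
  defines "M \<equiv> k+1-l" and "S \<equiv> {w::'a list. length w = k \<and> \<tau> \<le> real (occ w u)}"
  shows "real M * real (card {j. j<n \<and> win x j l = u}) \<le>
           real M * real k + real M * real (card {j. j<n \<and> win x j k \<in> S}) + real n * \<tau>"
proof -
  define f where "f j = (of_bool (win x j l = u) :: real)" for j
  have f01: "0 \<le> f j" "f j \<le> 1" for j by (auto simp: f_def)
  have A: "(\<Sum>j<n. f j) = real (card {j. j<n \<and> win x j l = u})"
  proof -
    have "(\<Sum>j<n. f j) = real (card ({..<n} \<inter> {j. win x j l = u}))"
      unfolding f_def by (rule sum_of_bool_eq) simp_all
    also have "{..<n} \<inter> {j. win x j l = u} = {j. j<n \<and> win x j l = u}" by auto
    finally show ?thesis .
  qed
  have occw: "real (occ (win x j k) u) = (\<Sum>t<M. f (j+t))" for j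
    using occ_win[OF assms(1,3)] by (simp add: M_def f_def)
  have "real M * (real (card {j. j<n \<and> win x j l = u}) - real k) = (\<Sum>t<M. (\<Sum>j<n. f j) - real k)"
    using A by simp
  also have "\<dots> \<le> (\<Sum>t<M. \<Sum>j<n. f (j + t))"
  proof (rule sum_mono)
    fix t assume "t \<in> {..<M}"
    then have "real t \<le> real k" using assms by (simp add: M_def)
    then show "(\<Sum>j<n. f j) - real k \<le> (\<Sum>j<n. f (j + t))"
      using shift_sum[of f n t, OF f01] by linarith
  qed
  also have "\<dots> = (\<Sum>j<n. \<Sum>t<M. f (j + t))" by (rule sum.swap)
  also have "\<dots> = (\<Sum>j<n. real (occ (win x j k) u))" using occw by simp
  also have "\<dots> \<le> (\<Sum>j<n. of_bool (win x j k \<in> S) * real M + \<tau>)"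
  proof (rule sum_mono)
    fix j assume "j \<in> {..<n}"
    have le: "real (occ (win x j k) u) \<le> real M"
    proof -
      have "(\<Sum>t<M. f (j+t)) \<le> (\<Sum>t<M. 1)" using f01 by (intro sum_mono) auto
      then show ?thesis using occw by simp
    qed
    show "real (occ (win x j k) u) \<le> of_bool (win x j k \<in> S) * real M + \<tau>"
    proof (cases "win x j k \<in> S")
      case True then show ?thesis using le assms(4) by simp
    next
      case False then show ?thesis by (simp add: S_def)
    qed
  qed
  also have "\<dots> = real M * real (card {j. j<n \<and> win x j k \<in> S}) + real n * \<tau>"
  proof -
    have "(\<Sum>j<n. of_bool (win x j k \<in> S) :: real) = real (card ({..<n} \<inter> {j. win x j k \<in> S}))"
      by (rule sum_of_bool_eq) simp_all
    also have "{..<n} \<inter> {j. win x j k \<in> S} = {j. j<n \<and> win x j k \<in> S}" by auto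
    finally have "(\<Sum>j<n. of_bool (win x j k \<in> S) :: real) = real (card {j. j<n \<and> win x j k \<in> S})" .
    then show ?thesis by (simp add: sum.distrib sum_distrib_right[symmetric] mult.commute)
  qed
  finally show ?thesis by (simp add: algebra_simps)
qed



lemma small_sum:
  fixes cnt :: "'b \<Rightarrow> nat"
  assumes "finite W"
  shows "(\<Sum>w\<in>W. if cnt w < I then real (cnt w) else 0) = (\<Sum>i<I. real i * real (card {w\<in>W. cnt w = i}))"
proof -
  have "(\<Sum>w\<in>W. if cnt w < I then real (cnt w) else 0) = (\<Sum>w\<in>W. \<Sum>i<I. real i * of_bool (cnt w = i))"
  proof (rule sum.cong)
    fix w assume "w \<in> W"
    have "(\<Sum>i<I. real i * of_bool (cnt w = i)) = (\<Sum>i\<in>{..<I}. if cnt w = i then real i else 0)"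
      by (rule sum.cong) auto
    also have "\<dots> = (if cnt w \<in> {..<I} then real (cnt w) else 0)" by (rule sum.delta') simp
    finally show "(if cnt w < I then real (cnt w) else 0) = (\<Sum>i<I. real i * of_bool (cnt w = i))" by simp
  qed simp
  also have "\<dots> = (\<Sum>i<I. \<Sum>w\<in>W. real i * of_bool (cnt w = i))" by (rule sum.swap)
  also have "\<dots> = (\<Sum>i<I. real i * real (card {w\<in>W. cnt w = i}))"
  proof (rule sum.cong)
    fix i assume "i \<in> {..<I}"
    have "(\<Sum>w\<in>W. of_bool (cnt w = i) :: real) = real (card (W \<inter> {w. cnt w = i}))"
      by (rule sum_of_bool_eq) (use assms in simp_all)
    also have "W \<inter> {w. cnt w = i} = {w\<in>W. cnt w = i}" by auto
    finally show "(\<Sum>w\<in>W. real i * of_bool (cnt w = i)) = real i * real (card {w\<in>W. cnt w = i})"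
      by (simp add: sum_distrib_left[symmetric])
  qed simp
  finally show ?thesis .
qed

lemma heavy_bound:
  fixes x :: "nat \<Rightarrow> 'a::finite" and S :: "'a list set"
  assumes "S \<subseteq> {w. length w = k}" "n \<le> L"
  defines "cnt \<equiv> (\<lambda>w. card {j. j<L \<and> win x j k = w})"
  shows "real (card {j. j<n \<and> win x j k \<in> S}) \<le>
          real I * real (card S) + real L - (\<Sum>i<I. real i * real (card {w. length w = k \<and> cnt w = i}))"
proof -
  let ?W = "{w::'a list. length w = k}"
  have finS: "finite S" using assms(1) finite_subset by (metis finite_words)
  have "card {j. j<n \<and> win x j k \<in> S} \<le> card {j. j<L \<and> win x j k \<in> S}"
    by (rule card_mono) (use assms(2) in auto)
  also have "card {j. j<L \<and> win x j k \<in> S} = (\<Sum>w\<in>S. card {j\<in>{j. j<L \<and> win x j k \<in> S}. win x j k = w})"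
    by (rule sum_fib[symmetric]) (use finS in auto)
  also have "\<dots> = (\<Sum>w\<in>S. cnt w)"
    unfolding cnt_def
  proof (rule sum.cong)
    fix w assume "w \<in> S"
    then have "{j \<in> {j. j < L \<and> win x j k \<in> S}. win x j k = w} = {j. j < L \<and> win x j k = w}" by auto
    then show "card {j \<in> {j. j < L \<and> win x j k \<in> S}. win x j k = w} = card {j. j < L \<and> win x j k = w}" by simp
  qed simp
  finally have c1: "real (card {j. j<n \<and> win x j k \<in> S}) \<le> (\<Sum>w\<in>S. real (cnt w))"
    by (metis of_nat_le_iff of_nat_sum)
  have "(\<Sum>w\<in>S. real (cnt w)) \<le> (\<Sum>w\<in>S. real I + (if cnt w < I then 0 else real (cnt w)))"
    by (rule sum_mono) auto
  also have "\<dots> = real I * real (card S) + (\<Sum>w\<in>S. if cnt w < I then 0 else real (cnt w))"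
    by (simp add: sum.distrib)
  also have "(\<Sum>w\<in>S. if cnt w < I then 0 else real (cnt w)) \<le> (\<Sum>w\<in>?W. if cnt w < I then 0 else real (cnt w))"
    by (rule sum_mono2) (use assms(1) in auto)
  also have "(\<Sum>w\<in>?W. if cnt w < I then 0 else real (cnt w)) =
             (\<Sum>w\<in>?W. real (cnt w)) - (\<Sum>w\<in>?W. if cnt w < I then real (cnt w) else 0)"
    unfolding sum_subtractf[symmetric] by (rule sum.cong) auto
  also have "(\<Sum>w\<in>?W. real (cnt w)) = real L"
  proof -
    have "(\<Sum>w\<in>?W. card {j\<in>{..<L}. win x j k = w}) = card {..<L::nat}"
      by (rule sum_fib) auto
    then have "(\<Sum>w\<in>?W. cnt w) = L" unfolding cnt_def by simp
    then show ?thesis by (metis of_nat_sum)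
  qed
  also have "(\<Sum>w\<in>?W. if cnt w < I then real (cnt w) else 0) = (\<Sum>i<I. real i * real (card {w\<in>?W. cnt w = i}))"
    by (rule small_sum) simp
  finally show ?thesis using c1 by simp
qed



lemma Zfreq_eq:
  fixes x :: "nat \<Rightarrow> 'a::finite"
  assumes "k \<ge> 1"
  shows "Zfreq lam i k x * real CARD('a)^k =
    real (card {w::'a list. length w = k \<and> card {j. j < nat \<lfloor>lam * real CARD('a)^k\<rfloor> \<and> win x j k = w} = i})"
proof -
  have "{w::'a list. length w = k \<and> occ (pref x (nat \<lfloor>lam * real CARD('a) ^ k\<rfloor> + k - 1)) w = i}
      = {w::'a list. length w = k \<and> card {j. j < nat \<lfloor>lam * real CARD('a)^k\<rfloor> \<and> win x j k = w} = i}"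
    using occ_pref_L[OF _ assms, of _ x] by auto
  then show ?thesis unfolding Zfreq_def by simp
qed

lemma liminf_ev:
  assumes "ereal p = liminf (\<lambda>k. ereal (f k))" "\<delta> > 0"
  shows "eventually (\<lambda>k. p - \<delta> < f k) sequentially"
proof -
  have "ereal (p - \<delta>) < liminf (\<lambda>k. ereal (f k))" using assms by (simp flip: assms(1))
  then have "eventually (\<lambda>k. ereal (p - \<delta>) < ereal (f k)) sequentially"
    using le_Liminf_iff[of "liminf (\<lambda>k. ereal (f k))" sequentially "\<lambda>k. ereal (f k)"] by auto
  then show ?thesis by simp
qed

lemma k_over_pow:
  fixes b :: real
  assumes "b \<ge> 2" "\<epsilon> > 0"
  shows "eventually (\<lambda>k. real k \<le> \<epsilon> * b^k) sequentially"
proof -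
  have "(\<lambda>k. real k / 2^k) \<longlonglongrightarrow> 0" by real_asymp
  then have "eventually (\<lambda>k. real k / 2^k < \<epsilon>) sequentially"
    using assms(2) by (rule order_tendstoD)
  then show ?thesis
  proof (rule eventually_mono)
    fix k assume "real k / 2^k < \<epsilon>"
    then have "real k \<le> \<epsilon> * 2^k" by (simp add: field_simps)
    also have "\<dots> \<le> \<epsilon> * b^k" using assms by (intro mult_left_mono power_mono) auto
    finally show "real k \<le> \<epsilon> * b^k" .
  qed
qed

lemma blocks:
  fixes L :: "nat \<Rightarrow> nat"
  assumes "mono L" "\<And>m. \<exists>k. m \<le> L k" "K \<ge> 1"
    and "\<And>k n. k \<ge> K \<Longrightarrow> L (k-1) < n \<Longrightarrow> n \<le> L k \<Longrightarrow> P n"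
  shows "eventually P sequentially"
proof (rule eventually_sequentiallyI[of "Suc (L (K-1))"])
  fix n assume n: "Suc (L (K-1)) \<le> n"
  define k where "k = (LEAST k. n \<le> L k)"
  have nk: "n \<le> L k" unfolding k_def by (rule LeastI_ex) (use assms(2) in blast)
  have kK: "k \<ge> K"
  proof (rule ccontr)
    assume "\<not> K \<le> k"
    then have "k \<le> K - 1" by simp
    then have "L k \<le> L (K-1)" using assms(1) by (simp add: monoD)
    then show False using n nk by simp
  qed
  have "L (k-1) < n"
  proof (rule ccontr)
    assume "\<not> L (k-1) < n"
    then have "n \<le> L (k-1)" by simp
    then have "k \<le> k - 1" unfolding k_def by (rule Least_le) 
    then show False using kK assms(3) by simp
  qed
  then show "P n" using assms(4)[OF kK _ nk] by simp
qed



lemma occ_le_A: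
  assumes "length u = l" "1 \<le> l"
  shows "occ (pref x n) u \<le> card {j. j<n \<and> win x j l = u}"
  unfolding occ_pref using assms by (intro card_mono) auto

lemma block_bound:
  fixes x :: "nat \<Rightarrow> 'a::finite" and u :: "'a list"
  assumes b2: "real CARD('a) \<ge> 2" and lam: "lam > 0" and ul: "length u = l" "1 \<le> l" "l \<le> k"
    and eta: "\<eta> > 0" and epsdef: "\<epsilon> = \<eta> * lam / (8 * real CARD('a))"
    and hk1: "real k \<le> \<epsilon> * real CARD('a)^k"
    and hk2: "real I * real (card {w::'a list. length w = k \<and>
                ((1/real CARD('a))^l + \<eta>/2) * real (k+1-l) \<le> real (occ w u)}) \<le> \<epsilon> * real CARD('a)^k"
    and hk3: "(\<Sum>i<I. real i * Zfreq lam i k x) \<ge> lam - 2*\<epsilon>"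
    and n1: "nat \<lfloor>lam * real CARD('a)^(k-1)\<rfloor> < n" and n2: "n \<le> nat \<lfloor>lam * real CARD('a)^k\<rfloor>"
  shows "real (occ (pref x n) u) \<le> ((1/real CARD('a))^l + \<eta>) * real n"
proof -
  define b where "b = real CARD('a)"
  define c where "c = (1/b)^l"
  define M where "M = k+1-l"
  define \<tau> where "\<tau> = (c + \<eta>/2) * real M"
  define S where "S = {w::'a list. length w = k \<and> \<tau> \<le> real (occ w u)}"
  define L where "L = nat \<lfloor>lam * b^k\<rfloor>"
  define cnt where "cnt w = card {j. j<L \<and> win x j k = w}" for w
  define A where "A = card {j. j<n \<and> win x j l = u}"
  define J where "J = card {j. j<n \<and> win x j k \<in> S}"
  have k1: "k \<ge> 1" using ul by simp
  have bpos: "b > 0" using b2 by (simp add: b_def)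
  have Mpos: "real M > 0" using ul by (simp add: M_def)
  have c0: "c \<ge> 0" using bpos by (simp add: c_def)
  have tau0: "\<tau> \<ge> 0" using c0 eta Mpos by (simp add: \<tau>_def)
  have dc: "real M * real A \<le> real M * real k + real M * real J + real n * \<tau>"
    using double_count[OF ul(1,2,3) tau0, of n x] unfolding A_def J_def S_def M_def by simp
  have "real M * real A \<le> real M * (real k + real J + real n * (c + \<eta>/2))"
    using dc by (simp add: \<tau>_def algebra_simps)
  then have A1: "real A \<le> real k + real J + real n * (c + \<eta>/2)"
    using Mpos by simp
  have nL: "n \<le> L" using n2 by (simp add: L_def b_def)
  have hb: "real J \<le> real I * real (card S) + real L - (\<Sum>i<I. real i * real (card {w. length w = k \<and> cnt w = i}))"
    unfolding J_def cnt_def by (rule heavy_bound) (use nL in \<open>auto simp: S_def\<close>)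
  have zf: "real (card {w. length w = k \<and> cnt w = i}) = Zfreq lam i k x * b^k" for i
    using Zfreq_eq[OF k1, of lam i x] by (simp add: cnt_def L_def b_def)
  have "(\<Sum>i<I. real i * real (card {w. length w = k \<and> cnt w = i})) = b^k * (\<Sum>i<I. real i * Zfreq lam i k x)"
    by (simp add: zf sum_distrib_left algebra_simps)
  also have "\<dots> \<ge> b^k * (lam - 2*\<epsilon>)" using hk3 bpos by (intro mult_left_mono) auto
  finally have s3: "(\<Sum>i<I. real i * real (card {w. length w = k \<and> cnt w = i})) \<ge> b^k * (lam - 2*\<epsilon>)" .
  have LL: "real L \<le> lam * b^k"
  proof -
    have "0 \<le> lam * b^k" using lam bpos by simp
    then show ?thesis unfolding L_def by linarith
  qed
  have hk2': "real I * real (card S) \<le> \<epsilon> * b^k"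
    using hk2 by (simp add: S_def \<tau>_def c_def M_def b_def)
  have J3: "real J \<le> 3 * \<epsilon> * b^k"
    using hb s3 LL hk2' by (simp add: algebra_simps)
  have "lam * b^(k-1) < real n"
  proof -
    have "lam * b^(k-1) < real (nat \<lfloor>lam * b^(k-1)\<rfloor>) + 1" by linarith
    then show ?thesis using n1 by (simp add: b_def)
  qed
  then have "lam * b^k < b * real n"
    using k1 bpos by (metis mult.left_commute mult_less_cancel_left_pos power_eq_if not_one_le_zero)
  then have bk: "b^k < b * real n / lam" using lam by (simp add: field_simps)
  have "real A \<le> 4 * \<epsilon> * b^k + real n * (c + \<eta>/2)"
    using A1 J3 hk1 by (simp add: b_def)
  also have "4 * \<epsilon> * b^k \<le> 4 * \<epsilon> * (b * real n / lam)"
    using bk \<open>\<epsilon> = _\<close> eta lam bpos by (intro mult_left_mono) (auto simp: b_def)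
  also have "4 * \<epsilon> * (b * real n / lam) = real n * (\<eta>/2)"
    using epsdef lam bpos by (simp add: b_def field_simps)
  finally have "real A \<le> (c + \<eta>) * real n" by (simp add: algebra_simps)
  moreover have "real (occ (pref x n) u) \<le> real A"
    using occ_le_A[OF ul(1,2)] by (simp add: A_def)
  ultimately show ?thesis by (simp add: c_def b_def)
qed



lemma upper:
  fixes x :: "nat \<Rightarrow> 'a::finite" and lam :: real and p :: "nat \<Rightarrow> real" and u :: "'a list"
  assumes b2: "CARD('a) \<ge> 2" and lam: "lam > 0"
    and lim: "\<And>i. ereal (p i) = liminf (\<lambda>k. ereal (Zfreq lam i k x))"
    and sums: "(\<lambda>i. real i * p i) sums lam"
    and ul: "length u = l" "l \<ge> 1" and eta: "\<eta> > 0"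
  shows "eventually (\<lambda>n. real (occ (pref x n) u) \<le> ((1 / real CARD('a))^l + \<eta>) * real n) sequentially"
proof -
  define b where "b = real CARD('a)"
  define \<epsilon> where "\<epsilon> = \<eta> * lam / (8*b)"
  have b2': "b \<ge> 2" using b2 unfolding b_def by linarith
  have eps: "\<epsilon> > 0" using b2' eta lam by (simp add: \<epsilon>_def)
  have "eventually (\<lambda>n. lam - \<epsilon> < (\<Sum>i<n. real i * p i)) sequentially"
    using sums unfolding sums_def by (rule order_tendstoD) (simp add: eps)
  then obtain I where I: "lam - \<epsilon> < (\<Sum>i<I. real i * p i)"
    unfolding eventually_sequentially by auto
  define \<delta> where "\<delta> = \<epsilon> / (real I * real I + 1)"
  have dpos: "\<delta> > 0" using eps unfolding \<delta>_def by (intro divide_pos_pos) (auto intro: add_nonneg_pos)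
  have E3: "eventually (\<lambda>k. \<forall>i\<in>{..<I}. p i - \<delta> < Zfreq lam i k x) sequentially"
    by (rule eventually_ball_finite) (use liminf_ev[OF lim dpos] in auto)
  have E1: "eventually (\<lambda>k. real k \<le> \<epsilon> * b^k) sequentially"
    by (rule k_over_pow[OF b2' eps])
  define K2 where "K2 = l + nat \<lceil>8 * real I * real l / (\<eta>^2 * \<epsilon>)\<rceil>"
  have E2: "eventually (\<lambda>k. K2 \<le> k) sequentially" by (rule eventually_ge_at_top)
  obtain K0 where K0: "\<And>k. k \<ge> K0 \<Longrightarrow> (\<forall>i\<in>{..<I}. p i - \<delta> < Zfreq lam i k x) \<and> real k \<le> \<epsilon> * b^k \<and> K2 \<le> k"
    using eventually_conj[OF E3 eventually_conj[OF E1 E2]] unfolding eventually_sequentially by blast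
  define Lf where "Lf k = nat \<lfloor>lam * b^k\<rfloor>" for k
  have mono: "mono Lf"
    unfolding Lf_def
  proof (rule monoI)
    fix m n :: nat assume "m \<le> n"
    then have "b^m \<le> b^n" using b2' by (intro power_increasing) auto
    then have "lam * b^m \<le> lam * b^n" using lam by simp
    then show "nat \<lfloor>lam * b^m\<rfloor> \<le> nat \<lfloor>lam * b^n\<rfloor>" by (intro nat_mono floor_mono)
  qed
  have unb: "\<exists>k. m \<le> Lf k" for m
  proof -
    define k where "k = nat \<lceil>real m / lam\<rceil>"
    have "real m / lam \<le> real k" unfolding k_def by linarith
    also have "real k \<le> 2^k" using of_nat_less_two_power[of k] by simp
    also have "(2::real)^k \<le> b^k" using b2' by (intro power_mono) auto
    finally have "real m \<le> lam * b^k" using lam by (simp add: field_simps)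
    then have "m \<le> Lf k" unfolding Lf_def by linarith
    then show ?thesis by blast
  qed
  show ?thesis
  proof (rule blocks[OF mono unb, of "max K0 K2"])
    show "1 \<le> max K0 K2" using ul by (simp add: K2_def)
    fix k n assume k: "max K0 K2 \<le> k" and n1: "Lf (k-1) < n" and n2: "n \<le> Lf k"
    have kK0: "K0 \<le> k" using k by simp
    note Kk = K0[OF kK0]
    have lk: "l \<le> k" using Kk by (simp add: K2_def)
    define M where "M = k+1-l"
    define S where "S = {w::'a list. length w = k \<and> ((1/real CARD('a))^l + \<eta>/2) * real (k+1-l) \<le> real (occ w u)}"
    have hk2: "real I * real (card S) \<le> \<epsilon> * real CARD('a)^k"
    proof -
      have ch: "real (card S) * (\<eta>/2 * real M)^2 \<le> 2 * real l * real M * b^k"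
        using cheb[OF lk ul(1), of "\<eta>/2"] eta by (simp add: S_def M_def b_def)
      have Mbig: "real M > 8 * real I * real l / (\<eta>^2 * \<epsilon>)"
      proof -
        have "real M \<ge> 1 + real (nat \<lceil>8 * real I * real l / (\<eta>^2 * \<epsilon>)\<rceil>)"
          using Kk lk by (simp add: M_def K2_def)
        then show ?thesis by linarith
      qed
      have Mpos: "real M > 0" using lk by (simp add: M_def)
      have "real (card S) * (\<eta>^2 * real M) \<le> 8 * real l * b^k"
      proof -
        have "real (card S) * (\<eta>^2 * real M) * real M \<le> 8 * real l * b^k * real M"
          using ch by (simp add: power2_eq_square algebra_simps)
        then show ?thesis using Mpos by simp
      qed
      then have "real I * (real (card S) * (\<eta>^2 * real M)) \<le> real I * (8 * real l * b^k)"
        by (intro mult_left_mono) auto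
      moreover have "real I * real (card S) * (8 * real I * real l / \<epsilon>) \<le> real I * real (card S) * (\<eta>^2 * real M)"
      proof (rule mult_left_mono)
        show "8 * real I * real l / \<epsilon> \<le> \<eta>^2 * real M"
          using Mbig eta eps by (simp add: field_simps)
      qed simp
      ultimately have "real I * real (card S) * (8 * real I * real l / \<epsilon>) \<le> real I * (8 * real l * b^k)"
        by (simp add: algebra_simps)
      then have "(real I * real (card S)) * (real I * real l) \<le> (\<epsilon> * b^k) * (real I * real l)"
        using eps by (simp add: field_simps)
      moreover have "real I * real l > 0 \<or> I = 0" using ul by (cases "I = 0") auto
      ultimately show ?thesis using eps b2'
        by (auto simp: b_def dest: mult_right_le_imp_le)
    qed
    have hk3: "(\<Sum>i<I. real i * Zfreq lam i k x) \<ge> lam - 2*\<epsilon>"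
    proof -
      have "(\<Sum>i<I. real i * (p i - \<delta>)) \<le> (\<Sum>i<I. real i * Zfreq lam i k x)"
        using Kk by (intro sum_mono mult_left_mono) (auto simp: less_imp_le)
      moreover have "(\<Sum>i<I. real i * (p i - \<delta>)) = (\<Sum>i<I. real i * p i) - \<delta> * (\<Sum>i<I. real i)"
        by (simp add: algebra_simps sum_subtractf sum_distrib_left)
      moreover have "\<delta> * (\<Sum>i<I. real i) \<le> \<epsilon>"
      proof -
        have "(\<Sum>i<I. real i) \<le> (\<Sum>i<I. real I)" by (intro sum_mono) auto
        also have "\<dots> = real I * real I" by simp
        finally have "(\<Sum>i<I. real i) \<le> real I * real I + 1" by simp
        then have "\<delta> * (\<Sum>i<I. real i) \<le> \<delta> * (real I * real I + 1)" using dpos by (intro mult_left_mono) auto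
        also have "\<dots> = \<epsilon>"
        proof -
          have "real I * real I + 1 > 0" by (intro add_nonneg_pos) auto
          then show ?thesis by (simp add: \<delta>_def)
        qed
        finally show ?thesis .
      qed
      ultimately show ?thesis using I by linarith
    qed
    show "real (occ (pref x n) u) \<le> ((1 / real CARD('a))^l + \<eta>) * real n"
      by (rule block_bound[OF _ lam ul(1,2) lk eta _ _ hk2[unfolded S_def] hk3])
         (use b2' Kk n1 n2 in \<open>auto simp: b_def \<epsilon>_def Lf_def\<close>)
  qed
qed



lemma occ_nil: "occ (pref x n) [] = Suc n"
proof -
  have "{i. i + length [] \<le> length (pref x n) \<and> take (length []) (drop i (pref x n)) = []} = {..n}"
    by (auto simp: pref_def)
  then show ?thesis by (simp add: occ_def)
qed

lemma sum_occ_pref: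
  fixes x :: "nat \<Rightarrow> 'a::finite"
  shows "(\<Sum>v\<in>{v::'a list. length v = l}. occ (pref x n) v) = n + 1 - l"
proof -
  have "(\<Sum>v\<in>{v::'a list. length v = l}. occ (pref x n) v) =
        (\<Sum>v\<in>{v::'a list. length v = l}. card {j\<in>{j. j + l \<le> n}. win x j l = v})"
    by (rule sum.cong) (auto simp: occ_pref)
  also have "\<dots> = card {j. j + l \<le> n}"
  proof (rule sum_fib)
    have "{j. j + l \<le> n} \<subseteq> {..n}" by auto
    then show "finite {j. j + l \<le> n}" using finite_subset by blast
  qed auto
  also have "{j. j + l \<le> n} = {..<n+1-l}" by auto
  finally show ?thesis by simp
qed

theorem theorem2:
  fixes x :: "nat \<Rightarrow> 'a::finite" and lam :: real and p :: "nat \<Rightarrow> real"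
  assumes "CARD('a) \<ge> 2"
    and "lam > 0"
    and "\<And>i. ereal (p i) = liminf (\<lambda>k. ereal (Zfreq lam i k x))"
    and "(\<lambda>i. real i * p i) sums lam"
  shows "borel_normal x"
  unfolding borel_normal_def
proof
  fix u :: "'a list"
  define l where "l = length u"
  define b where "b = real CARD('a)"
  define c where "c = (1/b)^l"
  have b2: "b \<ge> 2" using assms(1) unfolding b_def by linarith
  show "(\<lambda>n. real (occ (pref x n) u) / real n) \<longlonglongrightarrow> (1 / real CARD('a)) ^ length u"
  proof (cases "l = 0")
    case True
    then have u: "u = []" by (simp add: l_def)
    have "(\<lambda>n. real (Suc n) / real n) \<longlonglongrightarrow> 1" by real_asymp
    then show ?thesis by (simp add: u occ_nil)
  next
    case False
    then have l1: "l \<ge> 1" by simp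
    have cb: "c * b^l = 1" using b2 by (simp add: c_def power_one_over)
    have cpos: "c > 0" using b2 by (simp add: c_def)
    show ?thesis unfolding l_def[symmetric] b_def[symmetric] c_def[symmetric]
    proof (rule order_tendstoI)
      fix a assume a: "c < a"
      have "eventually (\<lambda>n. real (occ (pref x n) u) \<le> (c + (a-c)/2) * real n) sequentially"
        using upper[OF assms(1-4) l_def[symmetric] l1, of "(a-c)/2"] a by (simp add: c_def b_def)
      moreover have "eventually (\<lambda>n. n \<ge> 1) sequentially" by (rule eventually_ge_at_top)
      ultimately show "eventually (\<lambda>n. real (occ (pref x n) u) / real n < a) sequentially"
      proof (rule eventually_elim2)
        fix n :: nat assume h: "real (occ (pref x n) u) \<le> (c + (a-c)/2) * real n" and n: "n \<ge> 1"
        then have "real (occ (pref x n) u) / real n \<le> c + (a-c)/2" by (simp add: field_simps)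
        moreover have "c + (a-c)/2 < a" using a by (simp add: field_simps)
        ultimately show "real (occ (pref x n) u) / real n < a" by (rule order.strict_trans1)
      qed
    next
      fix a assume a: "a < c"
      define \<eta> where "\<eta> = (c - a) / (2 * b^l)"
      have eta: "\<eta> > 0" using a b2 by (simp add: \<eta>_def)
      let ?W = "{v::'a list. length v = l}"
      have E1: "eventually (\<lambda>n. \<forall>v\<in>?W. real (occ (pref x n) v) \<le> (c + \<eta>) * real n) sequentially"
        by (rule eventually_ball_finite) (use upper[OF assms(1-4) _ l1 eta] in \<open>auto simp: c_def b_def\<close>)
      define N where "N = nat \<lceil>2 * real l / (c - a)\<rceil> + 1"
      have E2: "eventually (\<lambda>n. n \<ge> N) sequentially" by (rule eventually_ge_at_top)
      show "eventually (\<lambda>n. a < real (occ (pref x n) u) / real n) sequentially"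
        using E1 E2
      proof (rule eventually_elim2)
        fix n assume h: "\<forall>v\<in>?W. real (occ (pref x n) v) \<le> (c + \<eta>) * real n" and n: "n \<ge> N"
        have npos: "real n > 0" using n by (simp add: N_def)
        have lsmall: "real l < (c - a) / 2 * real n"
        proof -
          have "2 * real l / (c - a) < real n" using n unfolding N_def by linarith
          then show ?thesis using a by (simp add: field_simps)
        qed
        have uW: "u \<in> ?W" by (simp add: l_def)
        have "real (n + 1 - l) = (\<Sum>v\<in>?W. real (occ (pref x n) v))"
          using sum_occ_pref[where l=l and x=x and n=n] by (metis of_nat_sum)
        also have "\<dots> = real (occ (pref x n) u) + (\<Sum>v\<in>?W - {u}. real (occ (pref x n) v))"
          by (rule sum.remove) (use uW in auto)
        finally have eqs: "real (n + 1 - l) = real (occ (pref x n) u) + (\<Sum>v\<in>?W - {u}. real (occ (pref x n) v))" .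
        have "(\<Sum>v\<in>?W - {u}. real (occ (pref x n) v)) \<le> (\<Sum>v\<in>?W - {u}. (c + \<eta>) * real n)"
          using h by (intro sum_mono) auto
        also have "\<dots> = (b^l - 1) * ((c + \<eta>) * real n)"
        proof -
          have "card (?W - {u}) = card ?W - 1" using uW by (simp add: card_Diff_singleton)
          moreover have "card ?W = CARD('a)^l" by (rule card_words)
          moreover have "CARD('a)^l \<ge> 1" using assms(1) by simp
          ultimately have "real (card (?W - {u})) = b^l - 1" by (simp add: b_def of_nat_diff)
          then show ?thesis by simp
        qed
        finally have "real (n + 1 - l) \<le> real (occ (pref x n) u) + (b^l - 1) * ((c + \<eta>) * real n)"
          using eqs by linarith
        moreover have "real n - real l \<le> real (n + 1 - l)" by linarith
        moreover have "(b^l - 1) * ((c + \<eta>) * real n) \<le> real n - c * real n + (c - a)/2 * real n"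
        proof -
          have "(b^l - 1) * ((c + \<eta>) * real n) = real n * (c * b^l) - c * real n + real n * (\<eta> * b^l) - \<eta> * real n"
            by (simp add: algebra_simps)
          also have "\<eta> * b^l = (c - a)/2" using b2 by (simp add: \<eta>_def)
          finally show ?thesis using cb eta npos by (simp add: algebra_simps)
        qed
        ultimately have "real n - real l \<le> real (occ (pref x n) u) + (real n - c * real n + (c - a)/2 * real n)"
          by linarith
        moreover have "(c - a)/2 * real n = (c * real n - a * real n) / 2" by (simp add: algebra_simps)
        ultimately have "real n - real l \<le> real (occ (pref x n) u) + (real n - c * real n + (c * real n - a * real n) / 2)"
          by simp
        moreover have "real l < (c * real n - a * real n) / 2" using lsmall by (simp add: algebra_simps)
        ultimately have "a * real n < real (occ (pref x n) u)" by argo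
        then show "a < real (occ (pref x n) u) / real n" using npos by (simp add: field_simps)
      qed
    qed
  qed
qed

end
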